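(* Let $\mathcal H$ be a real Hilbert space, $t_0>0$, and let $f:\mathcal H\to\mathbb R$ be a $\mathcal C^1$ function which is $\mu$-strongly convex for some $\mu>0$, whose gradient is $L$-Lipschitz continuous, and let $x^\star$ be its unique minimizer. Let $e:[t_0,+\infty[\to\mathcal H$ and let $x:[t_0,+\infty[\to\mathcal H$ be a solution trajectory of $$\ddot x(t)+2\sqrt\mu\,\dot x(t)+\nabla f\big(x(t)+\beta\dot x(t)\big)+e(t)=0.$$ Define $\mathcal E(t)=f(x(t)+\beta\dot x(t))-\min_{\mathcal H}f+\frac12\|\sqrt\mu(x(t)-x^\star)+\dot x(t)\|^2$. Suppose (a) $0\le\beta\le\frac1{2\sqrt\mu}$ and (b) $\int_{t_0}^{+\infty}\|e(t)\|dt<+\infty$. Then: (i) for all $t\ge t_0$, $$\mathcal E(t)\le\mathcal E(t_0)e^{-\frac{\sqrt\mu}2(t-t_0)}+Me^{-\frac{\sqrt\mu}2t}\int_{t_0}^te^{\frac{\sqrt\mu}2\tau}\|e(\tau)\|d\tau,$$ where $M:=\sqrt{\mathcal E(t_0)/c}+\frac1{2c}\int_{t_0}^{+\infty}\|e(\tau)\|d\tau$ with $c=\frac{\min\{\mu,1\}}{4\max\{\beta^2L^2,1\}}$; consequently $\lim_{t\to+\infty}\mathcal E(t)=0$, $\lim_{t\to+\infty}f(x(t))=\min_{\mathcal H}f$, and $\lim_{t\to+\infty}\|x(t)-x^\star\|=\lim_{t\to+\infty}\|\nabla f(x(t))\|=\lim_{t\to+\infty}\|\dot x(t)\|=0$;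 (ii) if moreover $\|e(t)\|=\mathcal O(1/t^p)$ as $t\to+\infty$ for some $p>0$, then $\mathcal E(t)=\mathcal O(1/t^p)$, and as $t\to+\infty$: $f(x(t))-\min_{\mathcal H}f=\mathcal O(1/t^p)$, $\|x(t)-x^\star\|^2=\mathcal O(1/t^p)$, $\|\dot x(t)\|^2=\mathcal O(1/t^p)$, $\|\nabla f(x(t))\|^2=\mathcal O(1/t^p)$.
   Context: $f$ is $\mu$-strongly convex if $f-\frac\mu2\|\cdot\|^2$ is convex. *)

theory Defs
  imports "HOL-Analysis.Analysis" "HOL-Library.Landau_Symbols"
begin

definition strongly_convex :: "real \<Rightarrow> ('a::real_inner \<Rightarrow> real) \<Rightarrow> bool" where
  "strongly_convex \<mu> f \<longleftrightarrow> convex_on UNIV (\<lambda>x. f x - \<mu> / 2 * (norm x)\<^sup>2)"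

end

theory Submission
  imports Defs "HOL-Real_Asymp.Real_Asymp"
begin



lemma sc_first_order:
  fixes f :: "'a::real_inner \<Rightarrow> real"
  assumes grad: "\<And>y. (f has_derivative (\<lambda>h. inner (gf y) h)) (at y)"
    and sc: "strongly_convex \<mu> f"
  shows "f u \<ge> f p + inner (gf p) (u - p) + \<mu>/2 * (norm (u - p))\<^sup>2"
proof -
  define h where "h = (\<lambda>x. f x - \<mu>/2 * (norm x)\<^sup>2)"
  define d where "d = u - p"
  define \<phi> where "\<phi> = (\<lambda>t::real. h (p + t *\<^sub>R d))"
  have n2: "(\<lambda>x::'a. (norm x)\<^sup>2) = (\<lambda>x. inner x x)"
    by (simp add: power2_norm_eq_inner)
  have "((\<lambda>x::'a. inner x x) has_derivative (\<lambda>k. inner p k + inner k p)) (at p)"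
    by (rule has_derivative_inner[OF has_derivative_ident has_derivative_ident])
  then have nd: "((\<lambda>x::'a. (norm x)\<^sup>2) has_derivative (\<lambda>k. 2 * inner p k)) (at p)"
    unfolding n2 by (simp add: inner_commute)
  have hder: "(h has_derivative (\<lambda>k. inner (gf p) k - \<mu>/2 * (2 * inner p k))) (at p)"
    unfolding h_def by (intro derivative_intros grad nd)
  have lin: "((\<lambda>t::real. p + t *\<^sub>R d) has_derivative (\<lambda>t. t *\<^sub>R d)) (at 0)"
    by (auto intro!: derivative_eq_intros)
  have "(\<phi> has_derivative (\<lambda>t. (\<lambda>k. inner (gf p) k - \<mu>/2 * (2 * inner p k)) (t *\<^sub>R d))) (at 0)"
    unfolding \<phi>_def using has_derivative_compose[OF lin, of h "\<lambda>k. inner (gf p) k - \<mu>/2 * (2 * inner p k)"] hder by simp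
  then have phid: "(\<phi> has_field_derivative (inner (gf p) d - \<mu> * inner p d)) (at 0)"
    unfolding has_field_derivative_def
    by (rule has_derivative_eq_rhs) (auto simp: fun_eq_iff algebra_simps)
  have hc: "convex_on UNIV h" using sc unfolding strongly_convex_def h_def by simp
  have conv: "convex_on UNIV \<phi>"
  proof (rule convex_onI[OF _ convex_UNIV])
    fix t a b :: real assume t: "0 < t" "t < 1"
    have "p + ((1 - t) * a + t * b) *\<^sub>R d = (1 - t) *\<^sub>R (p + a *\<^sub>R d) + t *\<^sub>R (p + b *\<^sub>R d)"
      by (simp add: algebra_simps)
    then show "\<phi> ((1 - t) *\<^sub>R a + t *\<^sub>R b) \<le> (1 - t) * \<phi> a + t * \<phi> b"
      unfolding \<phi>_def using convex_onD[OF hc, of t "p + a *\<^sub>R d" "p + b *\<^sub>R d"] t by simp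
  qed
  have "\<phi> 1 - \<phi> 0 \<ge> (inner (gf p) d - \<mu> * inner p d) * (1 - 0)"
    by (rule convex_on_imp_above_tangent[OF conv]) (use phid in auto)
  then have *: "f u - \<mu>/2 * (norm u)\<^sup>2 - (f p - \<mu>/2 * (norm p)\<^sup>2) \<ge> inner (gf p) d - \<mu> * inner p d"
    unfolding \<phi>_def h_def d_def by simp
  have "(norm u)\<^sup>2 = (norm p)\<^sup>2 + 2 * inner p d + (norm d)\<^sup>2"
    unfolding d_def power2_norm_eq_inner by (simp add: algebra_simps inner_commute)
  with * show ?thesis unfolding d_def[symmetric] by (simp add: algebra_simps)
qed



lemma quad_aux:
  fixes a u W :: real
  assumes "0 \<le> a" "a \<le> 1/2"
  shows "-2 * u\<^sup>2 + 2 * (1+a) * u * W - (3 - 3 * a - a\<^sup>2) * W\<^sup>2 \<le> 0"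
proof -
  have e: "-2 * u\<^sup>2 + 2 * (1+a) * u * W - (3 - 3 * a - a\<^sup>2) * W\<^sup>2
        = -2 * (u - (1+a)/2 * W)\<^sup>2 + ((3 * a\<^sup>2 + 8 * a - 5)/2) * W\<^sup>2"
    unfolding power2_eq_square by (simp add: field_simps)
  have "a\<^sup>2 \<le> 1/4" using mult_mono[of a "1/2" a "1/2"] assms by (simp add: power2_eq_square)
  then have "3 * a\<^sup>2 + 8 * a - 5 \<le> 0" using assms by simp
  then have "((3 * a\<^sup>2 + 8 * a - 5)/2) * W\<^sup>2 \<le> 0"
    by (simp add: mult_nonpos_nonneg)
  moreover have "0 \<le> (u - (1+a)/2 * W)\<^sup>2" by simp
  ultimately show ?thesis unfolding e by linarith
qed

lemma key_ineq:
  fixes z w g ee v xdd :: "'a::real_inner"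
  assumes s: "s > 0" and b: "0 \<le> \<beta>" "\<beta> * s \<le> 1/2"
    and c1: "inner z g \<ge> F + s\<^sup>2/2 * (norm z)\<^sup>2"
    and c2: "F \<ge> s\<^sup>2/2 * (norm z)\<^sup>2"
    and xdd: "xdd = (- 2 * s) *\<^sub>R w - g - ee"
    and v: "v = s *\<^sub>R (z - \<beta> *\<^sub>R w) + w"
  shows "inner g (w + \<beta> *\<^sub>R xdd) + inner v (s *\<^sub>R w + xdd) + (s/2) * (F + 1/2 * (norm v)\<^sup>2)
         \<le> - inner (v + \<beta> *\<^sub>R g) ee"
proof -
  define a where "a = \<beta> * s"
  define zz where "zz = inner z z"
  define ww where "ww = inner w w"
  define gg where "gg = inner g g"
  define zw where "zw = inner z w"
  define zg where "zg = inner z g"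
  define wg where "wg = inner w g"
  have nz: "(norm z)\<^sup>2 = zz" by (simp add: zz_def power2_norm_eq_inner)
  have nw: "(norm w)\<^sup>2 = ww" by (simp add: ww_def power2_norm_eq_inner)
  have eq: "inner g (w + \<beta> *\<^sub>R xdd) + inner v (s *\<^sub>R w + xdd) + (s/2) * (F + 1/2 * (norm v)\<^sup>2)
         + inner (v + \<beta> *\<^sub>R g) ee
       = -\<beta> * gg - \<beta> * s * wg - s * zg - s\<^sup>2 * zw - s * (1-a) * ww + s/2 * F
         + s/2 * (s\<^sup>2/2 * zz + s * (1-a) * zw + (1-a)\<^sup>2/2 * ww)"
    unfolding xdd v power2_norm_eq_inner zz_def ww_def gg_def zw_def zg_def wg_def a_def
    by (simp add: inner_add_left inner_add_right inner_diff_left inner_diff_right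
        inner_commute power2_eq_square algebra_simps; simp add: field_simps)
  have A: "0 \<le> \<beta> * (gg + s * wg + s\<^sup>2/4 * ww)"
  proof -
    have "gg + s * wg + s\<^sup>2/4 * ww = inner (g + (s/2) *\<^sub>R w) (g + (s/2) *\<^sub>R w)"
      unfolding gg_def wg_def ww_def
      by (simp add: inner_add_left inner_add_right inner_commute power2_eq_square algebra_simps)
    then show ?thesis using b by simp
  qed
  have B: "s * zg \<ge> s * F + s^3/2 * zz"
    using mult_left_mono[OF c1, of s] s unfolding zg_def[symmetric] nz
    by (simp add: algebra_simps power3_eq_cube power2_eq_square)
  have C: "s/2 * F \<ge> s^3/4 * zz"
    using mult_left_mono[OF c2, of "s/2"] s unfolding nz
    by (simp add: algebra_simps power3_eq_cube power2_eq_square)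
  have cs: "- zw \<le> norm z * norm w"
    using norm_cauchy_schwarz[of "-z" w] unfolding zw_def by simp
  have a0: "0 \<le> a" "a \<le> 1/2" using b s by (auto simp: a_def)
  have D: "- (s\<^sup>2 * (1+a)/2 * zw) \<le> s\<^sup>2 * (1+a)/2 * (norm z * norm w)"
    using mult_left_mono[OF cs, of "s\<^sup>2 * (1+a)/2"] a0 by simp
  have Q: "-2 * (s * norm z)\<^sup>2 + 2 * (1+a) * (s * norm z) * norm w - (3 - 3 * a - a\<^sup>2) * (norm w)\<^sup>2 \<le> 0"
    by (rule quad_aux[OF a0])
  have Q2: "s/4 * (-2 * (s * norm z)\<^sup>2 + 2 * (1+a) * (s * norm z) * norm w - (3 - 3 * a - a\<^sup>2) * (norm w)\<^sup>2) \<le> 0"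
    using Q s by (simp add: mult_nonneg_nonpos)
  have Q3: "s/4 * (-2 * (s * norm z)\<^sup>2 + 2 * (1+a) * (s * norm z) * norm w - (3 - 3 * a - a\<^sup>2) * (norm w)\<^sup>2)
     = - (s^3) / 2 * zz + s\<^sup>2 * (1+a)/2 * (norm z * norm w) - s * (3 - 3 * a - a\<^sup>2)/4 * ww"
    unfolding nz[symmetric] nw[symmetric] by (simp add: power2_eq_square power3_eq_cube field_simps)
  have "-\<beta> * gg - \<beta> * s * wg - s * zg - s\<^sup>2 * zw - s * (1-a) * ww + s/2 * F
         + s/2 * (s\<^sup>2/2 * zz + s * (1-a) * zw + (1-a)\<^sup>2/2 * ww)
     = - \<beta> * (gg + s * wg + s\<^sup>2/4 * ww) - s * zg + s/2 * F + s^3/4 * zz - (s\<^sup>2 * (1+a)/2 * zw)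
       - s * (3 - 3 * a - a\<^sup>2)/4 * ww"
    unfolding a_def by (simp add: power2_eq_square power3_eq_cube field_simps)
  then have "inner g (w + \<beta> *\<^sub>R xdd) + inner v (s *\<^sub>R w + xdd) + (s/2) * (F + 1/2 * (norm v)\<^sup>2)
         + inner (v + \<beta> *\<^sub>R g) ee \<le> 0"
    unfolding eq using A B C D Q2 Q3 by linarith
  then show ?thesis by linarith
qed



lemma deriv_le_integral:
  fixes G G' h :: "real \<Rightarrow> real"
  assumes ab: "a \<le> b"
    and d: "\<And>\<tau>. \<tau> \<in> {a..b} \<Longrightarrow> (G has_real_derivative G' \<tau>) (at \<tau> within {a..b})"
    and le: "\<And>\<tau>. \<tau> \<in> {a..b} \<Longrightarrow> G' \<tau> \<le> h \<tau>"
    and hi: "h integrable_on {a..b}"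
  shows "G b - G a \<le> integral {a..b} h"
proof -
  have "(G' has_integral (G b - G a)) {a..b}"
    by (rule fundamental_theorem_of_calculus[OF ab])
       (use d in \<open>auto simp: has_real_derivative_iff_has_vector_derivative\<close>)
  then show ?thesis using has_integral_le[OF _ integrable_integral[OF hi]] le by blast
qed

lemma integrable_exp_mult:
  fixes f :: "real \<Rightarrow> real"
  assumes fi: "f integrable_on S" and nn: "\<And>\<tau>. \<tau> \<in> S \<Longrightarrow> 0 \<le> f \<tau>" and sub: "{a..b} \<subseteq> S"
  shows "(\<lambda>\<tau>. exp (k * \<tau>) * f \<tau>) integrable_on {a..b}"
proof -
  have f1: "f integrable_on {a..b}" by (rule integrable_on_subinterval[OF fi sub])
  have f2: "f absolutely_integrable_on {a..b}"
    by (rule nonnegative_absolutely_integrable_1[OF f1]) (use nn sub in auto)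
  have c: "continuous_on {a..b} (\<lambda>\<tau>. exp (k * \<tau>))" by (intro continuous_intros)
  have "(\<lambda>\<tau>. exp (k * \<tau>) * f \<tau>) absolutely_integrable_on {a..b}"
  proof (rule absolutely_integrable_bounded_measurable_product_real[OF _ _ _ f2])
    show "(\<lambda>\<tau>. exp (k * \<tau>)) \<in> borel_measurable (lebesgue_on {a..b})"
      by (rule continuous_imp_measurable_on_sets_lebesgue[OF c]) simp
    show "{a..b} \<in> sets lebesgue" by simp
    show "bounded ((\<lambda>\<tau>. exp (k * \<tau>)) ` {a..b})"
      by (rule compact_imp_bounded[OF compact_continuous_image[OF c]]) simp
  qed
  then show ?thesis unfolding absolutely_integrable_on_def by blast
qed

lemma tail_small:
  fixes f :: "real \<Rightarrow> real"
  assumes fi: "f integrable_on {t0..}" and nn: "\<And>\<tau>. \<tau> \<ge> t0 \<Longrightarrow> 0 \<le> f \<tau>" and ep: "\<epsilon> > 0"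
  shows "\<exists>T\<ge>t0. \<forall>t\<ge>T. integral {T..t} f < \<epsilon>"
proof -
  define \<Phi> where "\<Phi> = (\<lambda>t. integral {t0..t} f)"
  have int: "f integrable_on {a..b}" if "t0 \<le> a" for a b
    by (rule integrable_on_subinterval[OF fi]) (use that in auto)
  have bnd: "\<Phi> t \<le> integral {t0..} f" for t
  proof (cases "t0 \<le> t")
    case True
    then show ?thesis unfolding \<Phi>_def
      by (intro integral_subset_le[OF _ int fi]) (use nn in auto)
  next
    case False
    then have "\<Phi> t = 0" unfolding \<Phi>_def by simp
    moreover have "0 \<le> integral {t0..} f" by (rule integral_nonneg[OF fi]) (use nn in auto)
    ultimately show ?thesis by simp
  qed
  have split: "integral {T..t} f = \<Phi> t - \<Phi> T" if "t0 \<le> T" "T \<le> t" for T t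
    using Henstock_Kurzweil_Integration.integral_combine[OF that int[of t0 t, OF order_refl]] unfolding \<Phi>_def by simp
  define S where "S = Sup (\<Phi> ` {t0..})"
  have bdd: "bdd_above (\<Phi> ` {t0..})" using bnd by (intro bdd_aboveI[of _ "integral {t0..} f"]) auto
  have "S - \<epsilon> < S" using ep by simp
  then obtain T where T: "T \<in> {t0..}" "S - \<epsilon> < \<Phi> T"
    unfolding S_def using less_cSup_iff[of "\<Phi> ` {t0..}" "S - \<epsilon>"] bdd by (auto simp: S_def)
  show ?thesis
  proof (intro exI[of _ T] conjI allI impI)
    show "t0 \<le> T" using T by simp
    fix t assume "T \<le> t"
    have "\<Phi> t \<le> S" unfolding S_def by (rule cSup_upper[OF _ bdd]) (use T \<open>T \<le> t\<close> in auto)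
    then show "integral {T..t} f < \<epsilon>" using split[of T t] T \<open>T \<le> t\<close> by simp
  qed
qed

lemma exp_decay: "s > 0 \<Longrightarrow> ((\<lambda>t. exp (- (s/2) * (t - T)) * C) \<longlongrightarrow> 0) at_top"
  for s T C :: real
  by real_asymp


lemma sq_sum_le: "(p + q)\<^sup>2 \<le> 2 * p\<^sup>2 + 2 * (q::real)\<^sup>2"
  using zero_le_power2[of "p - q"] by (simp add: power2_eq_square algebra_simps)



theorem theorem10:
  fixes f :: "'a::{real_inner, complete_space} \<Rightarrow> real"
    and gf :: "'a \<Rightarrow> 'a"
    and x x' x'' e :: "real \<Rightarrow> 'a"
    and xstar :: 'a
    and \<mu> L \<beta> t\<^sub>0 :: real
  assumes t0_pos: "t\<^sub>0 > 0"
    and mu_pos: "\<mu> > 0"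
    and grad: "\<And>y. (f has_derivative (\<lambda>h. inner (gf y) h)) (at y)"
    and grad_cont: "continuous_on UNIV gf"
    and sconv: "strongly_convex \<mu> f"
    and lip: "lipschitz_on L UNIV gf"
    and minimizer: "\<And>y. f xstar \<le> f y"
    and dx: "\<And>t. t \<ge> t\<^sub>0 \<Longrightarrow> (x has_vector_derivative x' t) (at t within {t\<^sub>0..})"
    and ddx: "\<And>t. t \<ge> t\<^sub>0 \<Longrightarrow> (x' has_vector_derivative x'' t) (at t within {t\<^sub>0..})"
    and ode: "\<And>t. t \<ge> t\<^sub>0 \<Longrightarrow>
       x'' t + (2 * sqrt \<mu>) *\<^sub>R x' t + gf (x t + \<beta> *\<^sub>R x' t) + e t = 0"
    and beta: "0 \<le> \<beta>" "\<beta> \<le> 1 / (2 * sqrt \<mu>)"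
    and e_int: "(\<lambda>t. norm (e t)) integrable_on {t\<^sub>0..}"
  defines "E \<equiv> \<lambda>t. f (x t + \<beta> *\<^sub>R x' t) - f xstar
                    + 1/2 * (norm (sqrt \<mu> *\<^sub>R (x t - xstar) + x' t))\<^sup>2"
    and "c \<equiv> min \<mu> 1 / (4 * max (\<beta>\<^sup>2 * L\<^sup>2) 1)"
  defines "M \<equiv> sqrt (E t\<^sub>0 / c) + 1 / (2 * c) * integral {t\<^sub>0..} (\<lambda>\<tau>. norm (e \<tau>))"
  shows "(\<forall>t\<ge>t\<^sub>0. E t \<le> E t\<^sub>0 * exp (- (sqrt \<mu> / 2) * (t - t\<^sub>0))
              + M * exp (- (sqrt \<mu> / 2) * t)
                  * integral {t\<^sub>0..t} (\<lambda>\<tau>. exp ((sqrt \<mu> / 2) * \<tau>) * norm (e \<tau>)))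
         \<and> (E \<longlongrightarrow> 0) at_top
         \<and> ((\<lambda>t. f (x t)) \<longlongrightarrow> f xstar) at_top
         \<and> ((\<lambda>t. norm (x t - xstar)) \<longlongrightarrow> 0) at_top
         \<and> ((\<lambda>t. norm (gf (x t))) \<longlongrightarrow> 0) at_top
         \<and> ((\<lambda>t. norm (x' t)) \<longlongrightarrow> 0) at_top
         \<and> (\<forall>p>0. (\<lambda>t. norm (e t)) \<in> O[at_top](\<lambda>t. 1 / t powr p) \<longrightarrow>
              E \<in> O[at_top](\<lambda>t. 1 / t powr p)
            \<and> (\<lambda>t. f (x t) - f xstar) \<in> O[at_top](\<lambda>t. 1 / t powr p)
            \<and> (\<lambda>t. (norm (x t - xstar))\<^sup>2) \<in> O[at_top](\<lambda>t. 1 / t powr p)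
            \<and> (\<lambda>t. (norm (x' t))\<^sup>2) \<in> O[at_top](\<lambda>t. 1 / t powr p)
            \<and> (\<lambda>t. (norm (gf (x t)))\<^sup>2) \<in> O[at_top](\<lambda>t. 1 / t powr p))"
proof -
  define s where "s = sqrt \<mu>"
  have s_pos: "s > 0" using mu_pos by (simp add: s_def)
  have s2: "s\<^sup>2 = \<mu>" using mu_pos by (simp add: s_def)
  have bs: "\<beta> * s \<le> 1/2"
    using beta(2) s_pos unfolding s_def[symmetric] by (simp add: field_simps)
  define y where "y = (\<lambda>t. x t + \<beta> *\<^sub>R x' t)"
  define v where "v = (\<lambda>t. s *\<^sub>R (x t - xstar) + x' t)"
  define F where "F = (\<lambda>u. f u - f xstar)"
  have E_eq: "E t = F (y t) + 1/2 * (norm (v t))\<^sup>2" for t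
    by (simp add: E_def y_def v_def F_def s_def)
  have L0: "0 \<le> L" using lipschitz_on_nonneg[OF lip] .
  have gstar: "gf xstar = 0"
  proof -
    have "(\<lambda>h. inner (gf xstar) h) = (\<lambda>v. 0)"
      by (rule differential_zero_maxmin[of xstar UNIV f]) (use grad minimizer in auto)
    then have "inner (gf xstar) (gf xstar) = 0" by metis
    then show ?thesis by simp
  qed
  have fo: "f u \<ge> f p + inner (gf p) (u - p) + \<mu>/2 * (norm (u - p))\<^sup>2" for u p
    by (rule sc_first_order[OF grad sconv])
  have Fge: "F u \<ge> \<mu>/2 * (norm (u - xstar))\<^sup>2" for u
    using fo[where u=u and p=xstar] by (simp add: F_def gstar)
  have F0: "F u \<ge> 0" for u using minimizer[of u] by (simp add: F_def)
  have zg: "inner (u - xstar) (gf u) \<ge> F u + \<mu>/2 * (norm (u - xstar))\<^sup>2" for u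
  proof -
    have "f xstar \<ge> f u + inner (gf u) (xstar - u) + \<mu>/2 * (norm (xstar - u))\<^sup>2" by (rule fo)
    moreover have "inner (gf u) (xstar - u) = - inner (u - xstar) (gf u)"
      by (simp add: inner_commute inner_diff_left inner_diff_right)
    moreover have "norm (xstar - u) = norm (u - xstar)" by (rule norm_minus_commute)
    ultimately show ?thesis by (simp add: F_def)
  qed
  have lipg: "norm (gf u) \<le> L * norm (u - xstar)" for u
    using lipschitz_onD[OF lip, of u xstar] by (simp add: gstar dist_norm)
  have conv_up: "F u \<le> L * (norm (u - xstar))\<^sup>2" for u
  proof -
    have "f xstar \<ge> f u + inner (gf u) (xstar - u) + \<mu>/2 * (norm (xstar - u))\<^sup>2" by (rule fo)
    moreover have "0 \<le> \<mu>/2 * (norm (xstar - u))\<^sup>2" using mu_pos by simp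
    moreover have "inner (gf u) (xstar - u) = - inner (gf u) (u - xstar)"
      by (simp add: inner_diff_right)
    moreover have "inner (gf u) (u - xstar) \<le> norm (gf u) * norm (u - xstar)"
      by (rule norm_cauchy_schwarz)
    moreover have "norm (gf u) * norm (u - xstar) \<le> L * norm (u - xstar) * norm (u - xstar)"
      by (rule mult_right_mono[OF lipg]) simp
    ultimately show ?thesis by (simp add: F_def power2_eq_square)
  qed
  have E_nn: "0 \<le> E t" for t using F0[of "y t"] by (simp add: E_eq)
  have c_pos: "c > 0" using mu_pos by (simp add: c_def)
  have ic: "1 / c = 4 * max (\<beta>\<^sup>2 * L\<^sup>2) 1 / min \<mu> 1" by (simp add: c_def)
  have ic1: "4 \<le> 1 / c"
  proof -
    have "1 \<le> max (\<beta>\<^sup>2 * L\<^sup>2) 1 / min \<mu> 1"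
      using mu_pos by (simp add: le_divide_eq min_def max_def)
    then show ?thesis unfolding ic by simp
  qed
  have ic2: "4 * \<beta>\<^sup>2 * L\<^sup>2 / \<mu> \<le> 1 / c"
  proof -
    have "\<beta>\<^sup>2 * L\<^sup>2 / \<mu> \<le> max (\<beta>\<^sup>2 * L\<^sup>2) 1 / \<mu>"
      using mu_pos by (intro divide_right_mono) auto
    also have "\<dots> \<le> max (\<beta>\<^sup>2 * L\<^sup>2) 1 / min \<mu> 1"
      using mu_pos by (intro divide_left_mono) auto
    finally show ?thesis unfolding ic by simp
  qed
  have vz: "x t - xstar = (y t - xstar) - \<beta> *\<^sub>R x' t" for t by (simp add: y_def)
  have Ebound: "(norm (v t + \<beta> *\<^sub>R gf (y t)))\<^sup>2 \<le> E t / c" for t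
  proof -
    let ?z = "norm (y t - xstar)" and ?v = "norm (v t)"
    have "norm (v t + \<beta> *\<^sub>R gf (y t)) \<le> ?v + \<beta> * (L * ?z)"
      using norm_triangle_ineq[of "v t" "\<beta> *\<^sub>R gf (y t)"] lipg[of "y t"] beta(1)
        mult_left_mono[OF lipg[of "y t"] beta(1)] by simp
    then have "(norm (v t + \<beta> *\<^sub>R gf (y t)))\<^sup>2 \<le> (?v + \<beta> * (L * ?z))\<^sup>2"
      by (rule power_mono) simp
    also have "\<dots> \<le> 2 * ?v\<^sup>2 + 2 * (\<beta> * (L * ?z))\<^sup>2" by (rule sq_sum_le)
    also have "\<dots> = 4 * (1/2 * ?v\<^sup>2) + (4 * \<beta>\<^sup>2 * L\<^sup>2 / \<mu>) * (\<mu>/2 * ?z\<^sup>2)"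
      using mu_pos by (simp add: power_mult_distrib field_simps)
    also have "\<dots> \<le> (1/c) * (1/2 * ?v\<^sup>2) + (1/c) * (\<mu>/2 * ?z\<^sup>2)"
      by (intro add_mono mult_right_mono ic1 ic2) (use mu_pos in auto)
    also have "\<dots> \<le> (1/c) * (1/2 * ?v\<^sup>2) + (1/c) * F (y t)"
      using Fge[of "y t"] c_pos by (intro add_left_mono mult_left_mono) auto
    also have "\<dots> = E t / c" using c_pos by (simp add: E_eq field_simps)
    finally show ?thesis .
  qed
  have vE: "(norm (v t))\<^sup>2 \<le> 2 * E t" for t using F0[of "y t"] by (simp add: E_eq)
  have zE: "\<mu> * (norm (y t - xstar))\<^sup>2 \<le> 2 * E t" for t
    using Fge[of "y t"] by (simp add: E_eq) (smt (verit) zero_le_power2)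
  have x'E: "(norm (x' t))\<^sup>2 \<le> 32 * E t" for t
  proof -
    let ?z = "norm (y t - xstar)" and ?v = "norm (v t)" and ?w = "norm (x' t)"
    have "(1 - \<beta> * s) *\<^sub>R x' t = v t - s *\<^sub>R (y t - xstar)"
      by (simp add: v_def vz algebra_simps)
    moreover have "norm ((1 - \<beta> * s) *\<^sub>R x' t) = (1 - \<beta> * s) * ?w" using bs by simp
    ultimately have h1: "(1 - \<beta> * s) * ?w \<le> ?v + s * ?z"
      using norm_triangle_ineq4[of "v t" "s *\<^sub>R (y t - xstar)"] bs s_pos by simp
    have h2: "1/2 * ?w \<le> (1 - \<beta> * s) * ?w" using bs by (intro mult_right_mono) auto
    have "1/2 * ?w \<le> ?v + s * ?z" using order_trans[OF h2 h1] .
    then have "?w \<le> 2 * (?v + s * ?z)" using mult_left_mono[of "1/2 * ?w" "?v + s * ?z" 2] by simp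
    then have "?w\<^sup>2 \<le> (2 * (?v + s * ?z))\<^sup>2" by (rule power_mono) simp
    also have "\<dots> = 4 * (?v + s * ?z)\<^sup>2" by (simp only: power_mult_distrib) simp
    also have "\<dots> \<le> 4 * (2 * ?v\<^sup>2 + 2 * (s * ?z)\<^sup>2)" by (rule mult_left_mono[OF sq_sum_le]) simp
    also have "\<dots> = 8 * ?v\<^sup>2 + 8 * (\<mu> * ?z\<^sup>2)" by (simp add: power_mult_distrib s2)
    also have "\<dots> \<le> 32 * E t" using vE[of t] zE[of t] by simp
    finally show ?thesis .
  qed
  define K where "K = 4 / \<mu> + 64 * \<beta>\<^sup>2"
  have K0: "K \<ge> 0" using mu_pos by (simp add: K_def)
  have xE: "(norm (x t - xstar))\<^sup>2 \<le> K * E t" for t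
  proof -
    let ?z = "norm (y t - xstar)" and ?w = "norm (x' t)"
    have "norm (x t - xstar) \<le> ?z + \<beta> * ?w"
      unfolding vz using norm_triangle_ineq4[of "y t - xstar" "\<beta> *\<^sub>R x' t"] beta(1) by simp
    then have "(norm (x t - xstar))\<^sup>2 \<le> (?z + \<beta> * ?w)\<^sup>2" by (rule power_mono) simp
    also have "\<dots> \<le> 2 * ?z\<^sup>2 + 2 * (\<beta> * ?w)\<^sup>2" by (rule sq_sum_le)
    also have "\<dots> = 2 * ?z\<^sup>2 + 2 * \<beta>\<^sup>2 * ?w\<^sup>2" by (simp add: power_mult_distrib)
    also have "\<dots> \<le> 2 * (2 * E t / \<mu>) + 2 * \<beta>\<^sup>2 * (32 * E t)"
    proof (intro add_mono mult_left_mono)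
      show "?z\<^sup>2 \<le> 2 * E t / \<mu>" using zE[of t] mu_pos by (simp add: field_simps)
    qed (use x'E[of t] in auto)
    also have "\<dots> = K * E t" using mu_pos by (simp add: K_def field_simps)
    finally show ?thesis .
  qed
  define E' where "E' = (\<lambda>t. inner (gf (y t)) (x' t + \<beta> *\<^sub>R x'' t) + inner (v t) (s *\<^sub>R x' t + x'' t))"
  have E_fun: "E = (\<lambda>t. f (y t) - f xstar + 1/2 * inner (v t) (v t))"
    by (simp add: fun_eq_iff E_eq F_def power2_norm_eq_inner)
  have Ed: "(E has_real_derivative E' t) (at t within {t\<^sub>0..})" if t: "t \<ge> t\<^sub>0" for t
  proof -
    have dx1: "(x has_derivative (\<lambda>h. h *\<^sub>R x' t)) (at t within {t\<^sub>0..})"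
      using dx[OF t] by (simp add: has_vector_derivative_def)
    have dx2: "(x' has_derivative (\<lambda>h. h *\<^sub>R x'' t)) (at t within {t\<^sub>0..})"
      using ddx[OF t] by (simp add: has_vector_derivative_def)
    have dy: "(y has_derivative (\<lambda>h. h *\<^sub>R x' t + \<beta> *\<^sub>R (h *\<^sub>R x'' t))) (at t within {t\<^sub>0..})"
      unfolding y_def by (intro has_derivative_add dx1 has_derivative_scaleR_right dx2)
    have dv: "(v has_derivative (\<lambda>h. s *\<^sub>R (h *\<^sub>R x' t - 0) + h *\<^sub>R x'' t)) (at t within {t\<^sub>0..})"
      unfolding v_def by (intro has_derivative_add has_derivative_scaleR_right has_derivative_diff
          dx1 dx2 has_derivative_const)
    have fy: "((\<lambda>t. f (y t)) has_derivative
        (\<lambda>h. inner (gf (y t)) (h *\<^sub>R x' t + \<beta> *\<^sub>R (h *\<^sub>R x'' t)))) (at t within {t\<^sub>0..})"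
      using has_derivative_compose[OF dy grad] .
    have vv: "((\<lambda>t. inner (v t) (v t)) has_derivative
        (\<lambda>h. inner (v t) (s *\<^sub>R (h *\<^sub>R x' t - 0) + h *\<^sub>R x'' t)
           + inner (s *\<^sub>R (h *\<^sub>R x' t - 0) + h *\<^sub>R x'' t) (v t))) (at t within {t\<^sub>0..})"
      using has_derivative_inner[OF dv dv] .
    have "(E has_derivative (\<lambda>h. (inner (gf (y t)) (h *\<^sub>R x' t + \<beta> *\<^sub>R (h *\<^sub>R x'' t)) - 0)
        + 1/2 * (inner (v t) (s *\<^sub>R (h *\<^sub>R x' t - 0) + h *\<^sub>R x'' t)
           + inner (s *\<^sub>R (h *\<^sub>R x' t - 0) + h *\<^sub>R x'' t) (v t)))) (at t within {t\<^sub>0..})"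
      unfolding E_fun by (intro has_derivative_add has_derivative_diff has_derivative_const
          has_derivative_mult_right fy vv)
    moreover have "(\<lambda>h. (inner (gf (y t)) (h *\<^sub>R x' t + \<beta> *\<^sub>R (h *\<^sub>R x'' t)) - 0)
        + 1/2 * (inner (v t) (s *\<^sub>R (h *\<^sub>R x' t - 0) + h *\<^sub>R x'' t)
           + inner (s *\<^sub>R (h *\<^sub>R x' t - 0) + h *\<^sub>R x'' t) (v t))) = (*) (E' t)"
      by (simp add: fun_eq_iff E'_def inner_add_left inner_add_right inner_commute algebra_simps)
    ultimately show ?thesis by (simp add: has_field_derivative_def)
  qed
  have Ekey: "E' t + (s/2) * E t \<le> - inner (v t + \<beta> *\<^sub>R gf (y t)) (e t)" if t: "t \<ge> t\<^sub>0" for t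
  proof -
    have "inner (gf (y t)) (x' t + \<beta> *\<^sub>R x'' t) + inner (v t) (s *\<^sub>R x' t + x'' t)
        + (s/2) * (F (y t) + 1/2 * (norm (v t))\<^sup>2) \<le> - inner (v t + \<beta> *\<^sub>R gf (y t)) (e t)"
    proof (rule key_ineq[OF s_pos beta(1) bs])
      show "F (y t) + s\<^sup>2/2 * (norm (y t - xstar))\<^sup>2 \<le> inner (y t - xstar) (gf (y t))"
        using zg[of "y t"] by (simp add: s2)
      show "s\<^sup>2/2 * (norm (y t - xstar))\<^sup>2 \<le> F (y t)" using Fge[of "y t"] by (simp add: s2)
      show "x'' t = (- 2 * s) *\<^sub>R x' t - gf (y t) - e t"
      proof -
        have "x'' t + ((2 * s) *\<^sub>R x' t + gf (y t) + e t) = 0"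
          using ode[OF t] unfolding y_def s_def by (simp add: add.assoc)
        then have h: "x'' t = - ((2 * s) *\<^sub>R x' t + gf (y t) + e t)"
          using eq_neg_iff_add_eq_0 by blast
        have m: "(- 2 * s) *\<^sub>R x' t = - ((2 * s) *\<^sub>R x' t)" by simp
        show ?thesis unfolding m h by (simp add: algebra_simps)
      qed
      show "v t = s *\<^sub>R ((y t - xstar) - \<beta> *\<^sub>R x' t) + x' t"
        by (simp add: v_def vz)
    qed
    then show ?thesis by (simp add: E'_def E_eq)
  qed
  have Ed1: "E' t \<le> - (s/2) * E t + sqrt (E t / c) * norm (e t)" if t: "t \<ge> t\<^sub>0" for t
  proof -
    have "- inner (v t + \<beta> *\<^sub>R gf (y t)) (e t) \<le> norm (v t + \<beta> *\<^sub>R gf (y t)) * norm (e t)"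
      using norm_cauchy_schwarz[of "- (v t + \<beta> *\<^sub>R gf (y t))" "e t"]
      by (simp only: inner_minus_left norm_minus_cancel)
    also have "\<dots> \<le> sqrt (E t / c) * norm (e t)"
      by (intro mult_right_mono real_le_rsqrt Ebound) simp
    finally show ?thesis using Ekey[OF t] by simp
  qed
  define I where "I = integral {t\<^sub>0..} (\<lambda>\<tau>. norm (e \<tau>))"
  have I0: "0 \<le> I" unfolding I_def by (rule integral_nonneg[OF e_int]) simp
  have eint: "(\<lambda>\<tau>. norm (e \<tau>)) integrable_on {a..b}" if "t\<^sub>0 \<le> a" for a b
    by (rule integrable_on_subinterval[OF e_int]) (use that in auto)
  have PhiI: "integral {t\<^sub>0..t} (\<lambda>\<tau>. norm (e \<tau>)) \<le> I" if "t\<^sub>0 \<le> t" for t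
    unfolding I_def by (rule integral_subset_le[OF _ eint[OF order_refl] e_int]) (use that in auto)
  have sqc: "sqrt c > 0" using c_pos by simp
  have Mb0: "sqrt (E t) \<le> sqrt (E t\<^sub>0) + sqrt \<delta> + I / (2 * sqrt c)" if t: "t \<ge> t\<^sub>0" and d: "\<delta> > 0" for t \<delta>
  proof -
    define Q where "Q = (\<lambda>\<tau>. sqrt (E \<tau> + \<delta>))"
    define Q' where "Q' = (\<lambda>\<tau>. inverse (sqrt (E \<tau> + \<delta>)) / 2 * E' \<tau>)"
    have pos: "E \<tau> + \<delta> > 0" for \<tau> using E_nn[of \<tau>] d by linarith
    have "Q t - Q t\<^sub>0 \<le> integral {t\<^sub>0..t} (\<lambda>\<tau>. (1 / (2 * sqrt c)) * norm (e \<tau>))"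
    proof (rule deriv_le_integral[OF t])
      fix \<tau> assume \<tau>: "\<tau> \<in> {t\<^sub>0..t}"
      have "((\<lambda>\<tau>. E \<tau> + \<delta>) has_real_derivative E' \<tau> + 0) (at \<tau> within {t\<^sub>0..t})"
        by (intro DERIV_add DERIV_const DERIV_subset[OF Ed]) (use \<tau> in auto)
      from DERIV_chain2[OF DERIV_real_sqrt[OF pos[of \<tau>]] this]
      show "(Q has_real_derivative Q' \<tau>) (at \<tau> within {t\<^sub>0..t})"
        by (simp add: Q_def Q'_def)
      have "sqrt (E \<tau> / c) = sqrt (E \<tau>) / sqrt c" by (simp add: real_sqrt_divide)
      also have "\<dots> \<le> sqrt (E \<tau> + \<delta>) / sqrt c"
        using d sqc by (intro divide_right_mono real_sqrt_le_mono) auto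
      finally have a3: "sqrt (E \<tau> / c) * norm (e \<tau>) \<le> sqrt (E \<tau> + \<delta>) / sqrt c * norm (e \<tau>)"
        by (rule mult_right_mono) simp
      have a1: "E' \<tau> \<le> - (s/2) * E \<tau> + sqrt (E \<tau> / c) * norm (e \<tau>)" using Ed1 \<tau> by auto
      have a2: "0 \<le> (s/2) * E \<tau>" using s_pos E_nn[of \<tau>] by simp
      have "E' \<tau> \<le> sqrt (E \<tau> + \<delta>) / sqrt c * norm (e \<tau>)" using a1 a2 a3 by linarith
      then have "Q' \<tau> \<le> inverse (sqrt (E \<tau> + \<delta>)) / 2 * (sqrt (E \<tau> + \<delta>) / sqrt c * norm (e \<tau>))"
        unfolding Q'_def by (rule mult_left_mono) (use pos[of \<tau>] in simp)
      also have "\<dots> = (1 / (2 * sqrt c)) * norm (e \<tau>)" using pos[of \<tau>] by (simp add: field_simps)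
      finally show "Q' \<tau> \<le> (1 / (2 * sqrt c)) * norm (e \<tau>)" .
    next
      show "(\<lambda>\<tau>. (1 / (2 * sqrt c)) * norm (e \<tau>)) integrable_on {t\<^sub>0..t}"
        using integrable_on_cmult_left[OF eint[OF order_refl], of "1 / (2 * sqrt c)"] by simp
    qed
    also have "\<dots> = (1 / (2 * sqrt c)) * integral {t\<^sub>0..t} (\<lambda>\<tau>. norm (e \<tau>))" by simp
    also have "\<dots> \<le> (1 / (2 * sqrt c)) * I" using PhiI[OF t] sqc by (intro mult_left_mono) auto
    finally have "Q t \<le> Q t\<^sub>0 + I / (2 * sqrt c)" by simp
    moreover have "sqrt (E t) \<le> Q t" unfolding Q_def using d by (intro real_sqrt_le_mono) simp
    moreover have "Q t\<^sub>0 \<le> sqrt (E t\<^sub>0) + sqrt \<delta>" unfolding Q_def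
      using sqrt_add_le_add_sqrt[OF E_nn[of t\<^sub>0], of \<delta>] d by simp
    ultimately show ?thesis by linarith
  qed
  have Mb1: "sqrt (E t) \<le> sqrt (E t\<^sub>0) + I / (2 * sqrt c)" if t: "t \<ge> t\<^sub>0" for t
  proof (rule ccontr)
    assume "\<not> ?thesis"
    then obtain d where d: "d > 0" "sqrt (E t) = sqrt (E t\<^sub>0) + I / (2 * sqrt c) + d"
      by (metis add.commute diff_add_cancel diff_gt_0_iff_gt not_le)
    have "sqrt (E t) \<le> sqrt (E t\<^sub>0) + sqrt ((d/2)\<^sup>2) + I / (2 * sqrt c)"
      by (rule Mb0[OF t]) (use d in simp)
    then show False using d by simp
  qed
  have M_eq: "M = sqrt (E t\<^sub>0) / sqrt c + I / (2 * c)"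
    unfolding M_def I_def by (simp add: real_sqrt_divide)
  have Mbound: "sqrt (E t / c) \<le> M" if t: "t \<ge> t\<^sub>0" for t
  proof -
    have "sqrt (E t / c) = sqrt (E t) / sqrt c" by (simp add: real_sqrt_divide)
    also have "\<dots> \<le> (sqrt (E t\<^sub>0) + I / (2 * sqrt c)) / sqrt c"
      by (rule divide_right_mono[OF Mb1[OF t]]) (use c_pos in simp)
    also have "\<dots> = M"
    proof -
      have cc: "sqrt c * sqrt c = c" using c_pos by simp
      show ?thesis unfolding M_eq using c_pos by (simp add: add_divide_distrib divide_divide_eq_left mult.assoc cc)
    qed
    finally show ?thesis .
  qed
  have M0: "0 \<le> M" unfolding M_eq using I0 c_pos E_nn[of t\<^sub>0] by (intro add_nonneg_nonneg divide_nonneg_nonneg) auto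
  have Ed2: "E' t \<le> - (s/2) * E t + M * norm (e t)" if t: "t \<ge> t\<^sub>0" for t
    using Ed1[OF t] mult_right_mono[OF Mbound[OF t] norm_ge_zero[of "e t"]] by linarith
  have Gd: "((\<lambda>\<tau>. exp ((s/2) * \<tau>) * E \<tau>) has_real_derivative
      exp ((s/2) * \<tau>) * (E' \<tau> + (s/2) * E \<tau>)) (at \<tau> within {a..b})"
    if "t\<^sub>0 \<le> a" "\<tau> \<in> {a..b}" for a b \<tau>
  proof -
    have d1: "((\<lambda>\<tau>. exp ((s/2) * \<tau>)) has_real_derivative exp ((s/2) * \<tau>) * (s/2)) (at \<tau> within {a..b})"
      by (auto intro!: derivative_eq_intros)
    have d2: "(E has_real_derivative E' \<tau>) (at \<tau> within {a..b})"
      by (rule DERIV_subset[OF Ed]) (use that in auto)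
    from DERIV_mult[OF d1 d2] show ?thesis by (simp add: algebra_simps)
  qed
  have Gb: "exp ((s/2) * \<tau>) * (E' \<tau> + (s/2) * E \<tau>) \<le> M * (exp ((s/2) * \<tau>) * norm (e \<tau>))"
    if "t\<^sub>0 \<le> \<tau>" for \<tau>
  proof -
    have "E' \<tau> + (s/2) * E \<tau> \<le> M * norm (e \<tau>)" using Ed2[OF that] by simp
    then have "exp ((s/2) * \<tau>) * (E' \<tau> + (s/2) * E \<tau>) \<le> exp ((s/2) * \<tau>) * (M * norm (e \<tau>))"
      by (rule mult_left_mono) simp
    then show ?thesis by (simp add: algebra_simps)
  qed
  have part1: "E t \<le> E t\<^sub>0 * exp (- (s / 2) * (t - t\<^sub>0))
              + M * exp (- (s / 2) * t)
                  * integral {t\<^sub>0..t} (\<lambda>\<tau>. exp ((s / 2) * \<tau>) * norm (e \<tau>))" if t: "t\<^sub>0 \<le> t" for t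
  proof -
    define G where "G = (\<lambda>\<tau>. exp ((s/2) * \<tau>) * E \<tau>)"
    define J where "J = integral {t\<^sub>0..t} (\<lambda>\<tau>. exp ((s / 2) * \<tau>) * norm (e \<tau>))"
    have "G t - G t\<^sub>0 \<le> integral {t\<^sub>0..t} (\<lambda>\<tau>. M * (exp ((s/2) * \<tau>) * norm (e \<tau>)))"
    proof (rule deriv_le_integral[OF t])
      fix \<tau> assume \<tau>: "\<tau> \<in> {t\<^sub>0..t}"
      show "(G has_real_derivative exp ((s/2) * \<tau>) * (E' \<tau> + (s/2) * E \<tau>)) (at \<tau> within {t\<^sub>0..t})"
        unfolding G_def by (rule Gd[OF order_refl \<tau>])
      show "exp ((s/2) * \<tau>) * (E' \<tau> + (s/2) * E \<tau>) \<le> M * (exp ((s/2) * \<tau>) * norm (e \<tau>))"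
        by (rule Gb) (use \<tau> in auto)
    next
      show "(\<lambda>\<tau>. M * (exp ((s/2) * \<tau>) * norm (e \<tau>))) integrable_on {t\<^sub>0..t}"
      proof -
        have ie: "(\<lambda>\<tau>. exp ((s/2) * \<tau>) * norm (e \<tau>)) integrable_on {t\<^sub>0..t}"
          by (rule integrable_exp_mult[OF e_int]) (use t in auto)
        show ?thesis using integrable_on_cmult_left[OF ie, of M] by simp
      qed
    qed
    then have Gt: "G t \<le> G t\<^sub>0 + M * J" by (simp add: J_def)
    have "E t = exp (- (s/2) * t) * G t" by (simp add: G_def exp_minus field_simps)
    also have "\<dots> \<le> exp (- (s/2) * t) * (G t\<^sub>0 + M * J)" by (rule mult_left_mono[OF Gt]) simp
    also have "\<dots> = E t\<^sub>0 * (exp (- (s/2) * t) * exp ((s/2) * t\<^sub>0)) + M * exp (- (s/2) * t) * J"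
      by (simp add: G_def algebra_simps)
    also have "exp (- (s/2) * t) * exp ((s/2) * t\<^sub>0) = exp (- (s / 2) * (t - t\<^sub>0))"
      by (simp add: exp_add[symmetric] field_simps)
    finally show ?thesis by (simp add: J_def)
  qed
  have decay: "E t \<le> exp (- (s/2) * (t - T)) * E T + M * integral {T..t} (\<lambda>\<tau>. norm (e \<tau>))"
    if T: "t\<^sub>0 \<le> T" "T \<le> t" for T t
  proof -
    define G where "G = (\<lambda>\<tau>. exp ((s/2) * \<tau>) * E \<tau>)"
    have "G t - G T \<le> integral {T..t} (\<lambda>\<tau>. (M * exp ((s/2) * t)) * norm (e \<tau>))"
    proof (rule deriv_le_integral[OF T(2)])
      fix \<tau> assume \<tau>: "\<tau> \<in> {T..t}"
      show "(G has_real_derivative exp ((s/2) * \<tau>) * (E' \<tau> + (s/2) * E \<tau>)) (at \<tau> within {T..t})"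
        unfolding G_def by (rule Gd[OF T(1) \<tau>])
      have "exp ((s/2) * \<tau>) * (E' \<tau> + (s/2) * E \<tau>) \<le> M * (exp ((s/2) * \<tau>) * norm (e \<tau>))"
        by (rule Gb) (use \<tau> T in auto)
      also have "\<dots> \<le> M * (exp ((s/2) * t) * norm (e \<tau>))"
        using \<tau> s_pos M0 by (intro mult_left_mono mult_right_mono) auto
      finally show "exp ((s/2) * \<tau>) * (E' \<tau> + (s/2) * E \<tau>) \<le> (M * exp ((s/2) * t)) * norm (e \<tau>)"
        by (simp add: algebra_simps)
    next
      show "(\<lambda>\<tau>. (M * exp ((s/2) * t)) * norm (e \<tau>)) integrable_on {T..t}"
        using integrable_on_cmult_left[OF eint[OF T(1)], of "M * exp ((s/2) * t)"] by simp
    qed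
    then have Gt: "G t \<le> G T + (M * exp ((s/2) * t)) * integral {T..t} (\<lambda>\<tau>. norm (e \<tau>))" by simp
    have "E t = exp (- (s/2) * t) * G t" by (simp add: G_def exp_minus field_simps)
    also have "\<dots> \<le> exp (- (s/2) * t) * (G T + (M * exp ((s/2) * t)) * integral {T..t} (\<lambda>\<tau>. norm (e \<tau>)))"
      by (rule mult_left_mono[OF Gt]) simp
    also have "\<dots> = E T * (exp (- (s/2) * t) * exp ((s/2) * T))
        + M * (exp (- (s/2) * t) * exp ((s/2) * t)) * integral {T..t} (\<lambda>\<tau>. norm (e \<tau>))"
      by (simp add: G_def algebra_simps)
    also have "exp (- (s/2) * t) * exp ((s/2) * T) = exp (- (s / 2) * (t - T))"
      by (simp add: exp_add[symmetric] field_simps)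
    also have "exp (- (s/2) * t) * exp ((s/2) * t) = 1"
      by (simp add: exp_add[symmetric])
    finally show ?thesis by (simp add: algebra_simps)
  qed
  have Elim: "(E \<longlongrightarrow> 0) at_top"
  proof (rule order_tendstoI)
    fix a :: real assume "a < 0"
    then show "eventually (\<lambda>t. a < E t) at_top"
      using E_nn by (auto intro: always_eventually less_le_trans)
  next
    fix \<epsilon> :: real assume \<epsilon>: "0 < \<epsilon>"
    have \<epsilon>': "\<epsilon> / (2 * (M + 1)) > 0" using \<epsilon> M0 by simp
    obtain T where T: "T \<ge> t\<^sub>0" "\<forall>t\<ge>T. integral {T..t} (\<lambda>\<tau>. norm (e \<tau>)) < \<epsilon> / (2 * (M + 1))"
      using tail_small[OF e_int _ \<epsilon>'] by auto
    have ev: "eventually (\<lambda>t. exp (- (s/2) * (t - T)) * E T < \<epsilon>/2) at_top"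
      using order_tendstoD(2)[OF exp_decay[OF s_pos, of T "E T"], of "\<epsilon>/2"] \<epsilon> by simp
    have "eventually (\<lambda>t. exp (- (s/2) * (t - T)) * E T < \<epsilon>/2 \<and> T \<le> t) at_top"
      by (intro eventually_conj ev eventually_ge_at_top)
    then show "eventually (\<lambda>t. E t < \<epsilon>) at_top"
    proof (rule eventually_mono)
      fix t assume h: "exp (- (s/2) * (t - T)) * E T < \<epsilon>/2 \<and> T \<le> t"
      have "E t \<le> exp (- (s/2) * (t - T)) * E T + M * integral {T..t} (\<lambda>\<tau>. norm (e \<tau>))"
        by (rule decay) (use T h in auto)
      moreover have "M * integral {T..t} (\<lambda>\<tau>. norm (e \<tau>)) \<le> M * (\<epsilon> / (2 * (M + 1)))"
        using T h M0 by (intro mult_left_mono) auto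
      moreover have "M * (\<epsilon> / (2 * (M + 1))) < \<epsilon> / 2"
        using M0 \<epsilon> by (simp add: field_simps)
      ultimately show "E t < \<epsilon>" using h by linarith
    qed
  qed
  have Fx: "F (x t) \<le> (L * K) * E t" for t
  proof -
    have "F (x t) \<le> L * (norm (x t - xstar))\<^sup>2" by (rule conv_up)
    also have "\<dots> \<le> L * (K * E t)" by (rule mult_left_mono[OF xE L0])
    finally show ?thesis by simp
  qed
  have xn: "norm (x t - xstar) \<le> sqrt (K * E t)" for t by (rule real_le_rsqrt[OF xE])
  have gn: "norm (gf (x t)) \<le> L * sqrt (K * E t)" for t
    using lipg[of "x t"] mult_left_mono[OF xn[of t] L0] by linarith
  have x'n: "norm (x' t) \<le> sqrt (32 * E t)" for t by (rule real_le_rsqrt[OF x'E])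
  have lim0: "((\<lambda>t. C * E t) \<longlongrightarrow> 0) at_top" for C
    using tendsto_mult[OF tendsto_const[of C] Elim] by simp
  have lims0: "((\<lambda>t. C2 * sqrt (C * E t)) \<longlongrightarrow> 0) at_top" for C C2
    using tendsto_mult[OF tendsto_const[of C2] tendsto_real_sqrt[OF lim0[of C]]] by simp
  have lim_f: "((\<lambda>t. f (x t)) \<longlongrightarrow> f xstar) at_top"
  proof (rule LIM_zero_cancel)
    show "((\<lambda>t. f (x t) - f xstar) \<longlongrightarrow> 0) at_top"
      by (rule tendsto_sandwich[OF _ _ tendsto_const lim0[of "L * K"]])
         (use F0 Fx in \<open>auto simp: F_def\<close>)
  qed
  have lim_x: "((\<lambda>t. norm (x t - xstar)) \<longlongrightarrow> 0) at_top"
    by (rule tendsto_sandwich[OF _ _ tendsto_const lims0[of 1 K]]) (use xn in auto)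
  have lim_g: "((\<lambda>t. norm (gf (x t))) \<longlongrightarrow> 0) at_top"
    by (rule tendsto_sandwich[OF _ _ tendsto_const lims0[of L K]]) (use gn in auto)
  have lim_x': "((\<lambda>t. norm (x' t)) \<longlongrightarrow> 0) at_top"
    by (rule tendsto_sandwich[OF _ _ tendsto_const lims0[of 1 32]]) (use x'n in auto)
  have bigo_dom: "g \<in> O[at_top](h)" if "\<And>t. norm (g t) \<le> C * norm (E t)" "E \<in> O[at_top](h)"
    for g h :: "real \<Rightarrow> real" and C
    by (rule landau_o.big_trans[OF bigoI[OF always_eventually] that(2)]) (use that(1) in auto)
  have part2: "E \<in> O[at_top](\<lambda>t. 1 / t powr p)"
    if p: "p > 0" and eO: "(\<lambda>t. norm (e t)) \<in> O[at_top](\<lambda>t. 1 / t powr p)" for p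
  proof -
    obtain C where C: "C > 0" "eventually (\<lambda>t. norm (norm (e t)) \<le> C * norm (1 / t powr p)) at_top"
      using landau_o.bigE[OF eO] by blast
    obtain T1 where T1: "\<And>t. t \<ge> T1 \<Longrightarrow> norm (norm (e t)) \<le> C * norm (1 / t powr p)"
      using C(2) by (auto simp: eventually_at_top_linorder)
    define a where "a = s/2"
    have a: "a > 0" using s_pos by (simp add: a_def)
    define T where "T = max (max T1 t\<^sub>0) (max 1 (2 * p / a))"
    have T: "T \<ge> T1" "T \<ge> t\<^sub>0" "T \<ge> 1" "T \<ge> 2 * p / a" by (auto simp: T_def)
    define K2 where "K2 = max (2 * M * C / a) (E T * T powr p)"
    have K2: "K2 \<ge> 2 * M * C / a" "K2 \<ge> E T * T powr p" by (auto simp: K2_def)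
    have K20: "K2 \<ge> 0" using K2(2) E_nn[of T] by (meson order_trans powr_ge_zero zero_le_mult_iff)
    have ebound: "norm (e \<tau>) \<le> C * \<tau> powr (- p)" if "\<tau> \<ge> T" for \<tau>
    proof -
      have "\<tau> > 0" using that T by linarith
      then show ?thesis using T1[of \<tau>] that T by (simp add: powr_minus_divide)
    qed
    have main: "E t \<le> K2 * t powr (- p)" if t: "t \<ge> T" for t
    proof -
      define H where "H = (\<lambda>\<tau>. exp (a * \<tau>) * (E \<tau> - K2 * \<tau> powr (- p)))"
      define H' where "H' = (\<lambda>\<tau>. exp (a * \<tau>) * a * (E \<tau> - K2 * \<tau> powr (- p))
          + (E' \<tau> - K2 * (- p * (\<tau> powr (- p) / \<tau>))) * exp (a * \<tau>))"
      have "H t - H T \<le> integral {T..t} (\<lambda>\<tau>. 0)"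
      proof (rule deriv_le_integral[OF t])
        fix \<tau> assume \<tau>: "\<tau> \<in> {T..t}"
        have tp: "\<tau> > 0" using \<tau> T by auto
        have pw: "\<tau> powr (- p - 1) = \<tau> powr (- p) / \<tau>"
          using tp by (simp add: powr_diff)
        have d1: "((\<lambda>\<tau>. exp (a * \<tau>)) has_real_derivative exp (a * \<tau>) * a) (at \<tau> within {T..t})"
          by (auto intro!: derivative_eq_intros)
        have d2: "(E has_real_derivative E' \<tau>) (at \<tau> within {T..t})"
          by (rule DERIV_subset[OF Ed]) (use \<tau> T in auto)
        have d3: "((\<lambda>\<tau>. \<tau> powr (- p)) has_real_derivative (- p) * \<tau> powr (- p - 1)) (at \<tau> within {T..t})"
          by (rule has_field_derivative_at_within[OF has_real_derivative_powr[OF tp]])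
        have d4: "((\<lambda>\<tau>. E \<tau> - K2 * \<tau> powr (- p)) has_real_derivative E' \<tau> - K2 * (- p * (\<tau> powr (- p) / \<tau>)))
            (at \<tau> within {T..t})"
          using DERIV_diff[OF d2 DERIV_cmult[OF d3, of K2]] unfolding pw by simp
        from DERIV_mult[OF d1 d4]
        show "(H has_real_derivative H' \<tau>) (at \<tau> within {T..t})" by (simp add: H_def H'_def)
        define P where "P = \<tau> powr (- p)"
        have P0: "P \<ge> 0" by (simp add: P_def)
        have b1: "E' \<tau> \<le> - a * E \<tau> + M * (C * P)"
        proof -
          have "M * norm (e \<tau>) \<le> M * (C * P)"
            unfolding P_def by (rule mult_left_mono[OF ebound M0]) (use \<tau> in auto)
          then show ?thesis using Ed2[of \<tau>] \<tau> T by (auto simp: a_def)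
        qed
        have pt: "p / \<tau> \<le> a / 2"
        proof -
          have h2: "T * a \<le> \<tau> * a" using \<tau> a by (intro mult_right_mono) auto
          have h1: "p * 2 \<le> T * a" using T(4) a by (simp add: field_simps)
          have "p * 2 \<le> \<tau> * a" using h1 h2 by linarith
          then show ?thesis using tp by (simp add: field_simps)
        qed
        have b2: "K2 * (p * (P / \<tau>)) \<le> K2 * (a / 2 * P)"
        proof -
          have "p * (P / \<tau>) = (p / \<tau>) * P" by simp
          also have "\<dots> \<le> (a / 2) * P" by (rule mult_right_mono[OF pt P0])
          finally show ?thesis by (rule mult_left_mono[OF _ K20])
        qed
        have b3: "M * (C * P) \<le> (a / 2 * K2) * P"
        proof -
          have "M * C \<le> a / 2 * K2" using K2(1) a by (simp add: field_simps)
          from mult_right_mono[OF this P0] show ?thesis by (simp add: mult.assoc)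
        qed
        have "a * (E \<tau> - K2 * P) + (E' \<tau> - K2 * (- p * (P / \<tau>))) \<le> 0"
        proof -
          have "a * (E \<tau> - K2 * P) + (E' \<tau> - K2 * (- p * (P / \<tau>)))
              = a * E \<tau> - a * K2 * P + E' \<tau> + K2 * (p * (P / \<tau>))" by (simp add: algebra_simps)
          also have "\<dots> \<le> a * E \<tau> - a * K2 * P + (- a * E \<tau> + M * (C * P)) + K2 * (a / 2 * P)"
            using b1 b2 by linarith
          also have "\<dots> \<le> a * E \<tau> - a * K2 * P + (- a * E \<tau> + (a / 2 * K2) * P) + K2 * (a / 2 * P)"
            using b3 by linarith
          also have "\<dots> = 0" by (simp add: algebra_simps)
          finally show ?thesis .
        qed
        then have "exp (a * \<tau>) * (a * (E \<tau> - K2 * P) + (E' \<tau> - K2 * (- p * (P / \<tau>)))) \<le> 0"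
          by (simp add: mult_nonneg_nonpos)
        then show "H' \<tau> \<le> 0" by (simp add: H'_def P_def algebra_simps)
      qed (rule integrable_0)
      then have "H t \<le> H T" by simp
      moreover have "H T \<le> 0"
      proof -
        have Tp: "T > 0" using T by linarith
        have "E T = E T * T powr p * T powr (- p)" using Tp by (simp add: powr_minus field_simps)
        also have "\<dots> \<le> K2 * T powr (- p)" by (rule mult_right_mono[OF K2(2)]) simp
        finally show ?thesis unfolding H_def by (simp add: mult_nonneg_nonpos)
      qed
      ultimately have "exp (a * t) * (E t - K2 * t powr (- p)) \<le> 0" by (simp add: H_def)
      then show ?thesis by (simp add: mult_le_0_iff)
    qed
    show ?thesis
    proof (rule bigoI[of _ K2])
      show "eventually (\<lambda>t. norm (E t) \<le> K2 * norm (1 / t powr p)) at_top"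
        using eventually_ge_at_top[of T]
      proof (rule eventually_mono)
        fix t assume t: "T \<le> t"
        then have "t > 0" using T by linarith
        then show "norm (E t) \<le> K2 * norm (1 / t powr p)"
          using main[OF t] E_nn[of t] by (simp add: powr_minus_divide)
      qed
    qed
  qed
  have part2': "E \<in> O[at_top](\<lambda>t. 1 / t powr p)
            \<and> (\<lambda>t. f (x t) - f xstar) \<in> O[at_top](\<lambda>t. 1 / t powr p)
            \<and> (\<lambda>t. (norm (x t - xstar))\<^sup>2) \<in> O[at_top](\<lambda>t. 1 / t powr p)
            \<and> (\<lambda>t. (norm (x' t))\<^sup>2) \<in> O[at_top](\<lambda>t. 1 / t powr p)
            \<and> (\<lambda>t. (norm (gf (x t)))\<^sup>2) \<in> O[at_top](\<lambda>t. 1 / t powr p)"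
    if p: "p > 0" and eO: "(\<lambda>t. norm (e t)) \<in> O[at_top](\<lambda>t. 1 / t powr p)" for p
  proof (intro conjI)
    have EO: "E \<in> O[at_top](\<lambda>t. 1 / t powr p)" by (rule part2[OF p eO])
    show "E \<in> O[at_top](\<lambda>t. 1 / t powr p)" by (rule EO)
    show "(\<lambda>t. f (x t) - f xstar) \<in> O[at_top](\<lambda>t. 1 / t powr p)"
      by (rule bigo_dom[OF _ EO, of _ "L * K"]) (use F0 Fx E_nn in \<open>auto simp: F_def\<close>)
    show "(\<lambda>t. (norm (x t - xstar))\<^sup>2) \<in> O[at_top](\<lambda>t. 1 / t powr p)"
      by (rule bigo_dom[OF _ EO, of _ K]) (use xE E_nn in auto)
    show "(\<lambda>t. (norm (x' t))\<^sup>2) \<in> O[at_top](\<lambda>t. 1 / t powr p)"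
      by (rule bigo_dom[OF _ EO, of _ 32]) (use x'E E_nn in auto)
    show "(\<lambda>t. (norm (gf (x t)))\<^sup>2) \<in> O[at_top](\<lambda>t. 1 / t powr p)"
    proof (rule bigo_dom[OF _ EO, of _ "L\<^sup>2 * K"])
      fix t
      have "(norm (gf (x t)))\<^sup>2 \<le> (L * norm (x t - xstar))\<^sup>2" by (rule power_mono[OF lipg]) simp
      also have "\<dots> = L\<^sup>2 * (norm (x t - xstar))\<^sup>2" by (simp add: power_mult_distrib)
      also have "\<dots> \<le> L\<^sup>2 * (K * E t)" by (rule mult_left_mono[OF xE]) simp
      finally show "norm ((norm (gf (x t)))\<^sup>2) \<le> L\<^sup>2 * K * norm (E t)" using E_nn[of t] by simp
    qed
  qed
  show ?thesis
    using part1 Elim lim_f lim_x lim_g lim_x' part2' unfolding s_def by blast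
qed

end
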